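(* There is an absolute constant $\beta>0$ such that for every integer $k>5$ there exists a $k$-terminal network $(G,c)$ with $G$ planar such that every mimicking network $(G',c')$ of $(G,c)$ satisfies $|E(G')|\ge \beta k^2$.
   Context: A network $(G,c)$ is an undirected graph $G$ with edge costs $c:E(G)\to\mathbb{R}^+$. A $k$-terminal network additionally has a set $Q=\{q_1,\dots,q_k\}\subseteq V(G)$ of distinguished vertices called terminals. For $S\subset Q$ with $S\neq\emptyset,Q$, write $\bar S=Q\setminus S$; a cut $(W,V(G)\setminus W)$ is $S$-separating if $W\cap Q\in\{S,\bar S\}$. The cost of a cut is the total cost of the edges with exactly one endpoint in $W$ (the cutset). $\mathrm{mincut}_{G,c}(S,\bar S)$ denotes the minimum cost of an $S$-separating cut. A mimicking network of a $k$-terminal network $(G,c)$ is a $k$-terminal network $(G',c')$ with the same terminal set $Q$ such that $\mathrm{mincut}_{G',c'}(S,\bar S)=\mathrm{mincut}_{G,c}(S,\bar S)$ for every $S\subset Q$ with $S\neq\emptyset,Q$. *)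

theory Defs
  imports "HOL-Analysis.Analysis"
begin

text \<open>A (finite, simple, undirected) graph on vertex set V with edge set E:
  every edge is a two-element subset of V. Vertices are natural numbers
  (every finite graph is isomorphic to one of this form).\<close>
definition graph :: "nat set \<Rightarrow> nat set set \<Rightarrow> bool" where
  "graph V E \<longleftrightarrow> finite V \<and> (\<forall>e\<in>E. e \<subseteq> V \<and> card e = 2)"

definition network :: "nat set \<Rightarrow> nat set set \<Rightarrow> (nat set \<Rightarrow> real) \<Rightarrow> bool" where
  "network V E c \<longleftrightarrow> graph V E \<and> (\<forall>e\<in>E. c e > 0)"

definition cut_cost :: "nat set set \<Rightarrow> (nat set \<Rightarrow> real) \<Rightarrow> nat set \<Rightarrow> real" where
  "cut_cost E c W = (\<Sum>e\<in>{e\<in>E. card (e \<inter> W) = 1}. c e)"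

definition separating :: "nat set \<Rightarrow> nat set \<Rightarrow> nat set \<Rightarrow> nat set \<Rightarrow> bool" where
  "separating V Q S W \<longleftrightarrow> W \<subseteq> V \<and> (W \<inter> Q = S \<or> W \<inter> Q = Q - S)"

definition mincut :: "nat set \<Rightarrow> nat set set \<Rightarrow> (nat set \<Rightarrow> real) \<Rightarrow> nat set \<Rightarrow> nat set \<Rightarrow> real" where
  "mincut V E c Q S = Min {cut_cost E c W | W. separating V Q S W}"

definition mimicking :: "nat set \<Rightarrow> nat set set \<Rightarrow> (nat set \<Rightarrow> real) \<Rightarrow> nat set \<Rightarrow>
    nat set \<Rightarrow> nat set set \<Rightarrow> (nat set \<Rightarrow> real) \<Rightarrow> bool" where
  "mimicking V E c Q V' E' c' \<longleftrightarrow> network V' E' c' \<and> Q \<subseteq> V' \<and>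
     (\<forall>S. S \<subseteq> Q \<and> S \<noteq> {} \<and> S \<noteq> Q \<longrightarrow> mincut V' E' c' Q S = mincut V E c Q S)"

definition planar :: "nat set \<Rightarrow> nat set set \<Rightarrow> bool" where
  "planar V E \<longleftrightarrow> (\<exists>(f :: nat \<Rightarrow> real^2) (\<gamma> :: nat set \<Rightarrow> real \<Rightarrow> real^2).
     inj_on f V \<and>
     (\<forall>e\<in>E. arc (\<gamma> e) \<and> {pathstart (\<gamma> e), pathfinish (\<gamma> e)} = f ` e \<and>
             path_image (\<gamma> e) \<inter> f ` V = f ` e) \<and>
     (\<forall>e\<in>E. \<forall>e'\<in>E. e \<noteq> e' \<longrightarrow> path_image (\<gamma> e) \<inter> path_image (\<gamma> e') \<subseteq> f ` (e \<inter> e')))"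

end

theory Submission
  imports Defs "HOL-Library.Nat_Bijection"
begin


definition qscale :: "rat \<Rightarrow> real \<Rightarrow> real" where
  "qscale q x = of_rat q * x"

interpretation rv: vector_space qscale
  by unfold_locales (auto simp: qscale_def algebra_simps of_rat_add of_rat_mult)

lemma rv_span_countable:
  assumes "finite B" shows "countable (rv.span B)"
proof -
  have "rv.span B \<subseteq> (\<lambda>u. \<Sum>v\<in>B. qscale (u v) v) ` (Pi\<^sub>E B (\<lambda>_. UNIV))"
  proof
    fix x assume "x \<in> rv.span B"
    then obtain u where u: "x = (\<Sum>v\<in>B. qscale (u v) v)"
      using rv.span_finite[OF assms] by auto
    have "x = (\<Sum>v\<in>B. qscale (restrict u B v) v)" unfolding u
      by (rule sum.cong) auto
    moreover have "restrict u B \<in> Pi\<^sub>E B (\<lambda>_. UNIV)" by auto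
    ultimately show "x \<in> (\<lambda>u. \<Sum>v\<in>B. qscale (u v) v) ` (Pi\<^sub>E B (\<lambda>_. UNIV))" by blast
  qed
  moreover have "countable (Pi\<^sub>E B (\<lambda>_. UNIV :: rat set))"
    by (rule countable_PiE) (auto simp: assms)
  ultimately show ?thesis by (meson countable_image countable_subset)
qed

lemma exists_indep:
  fixes lo :: "'a \<Rightarrow> real"
  assumes "finite A" "d > 0"
  shows "\<exists>x. (\<forall>a\<in>A. lo a < x a \<and> x a < lo a + d) \<and> inj_on x A \<and> rv.independent (x ` A)"
  using assms(1)
proof (induction A rule: finite_induct)
  case empty then show ?case by (auto simp: rv.independent_empty)
next
  case (insert a A)
  then obtain x where x: "\<forall>a\<in>A. lo a < x a \<and> x a < lo a + d" "inj_on x A" "rv.independent (x ` A)"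
    by blast
  have "countable (rv.span (x ` A))" using insert(1) by (intro rv_span_countable) auto
  moreover have "uncountable {lo a<..<lo a + d}" using assms(2) by (simp add: uncountable_open_interval)
  ultimately obtain y where y: "y \<in> {lo a<..<lo a + d}" "y \<notin> rv.span (x ` A)"
    by (metis countable_subset subsetI)
  define x' where "x' = x(a := y)"
  have img: "x' ` A = x ` A" using insert(2) unfolding x'_def by (auto intro!: image_cong)
  have ynot: "y \<notin> x ` A" using y(2) rv.span_base by blast
  show ?case
  proof (intro exI[of _ x'] conjI)
    show "\<forall>b\<in>insert a A. lo b < x' b \<and> x' b < lo b + d" using x(1) y(1) insert(2) by (auto simp: x'_def)
    show "inj_on x' (insert a A)" using x(2) ynot insert(2) img by (auto simp: x'_def inj_on_def)
    show "rv.independent (x' ` insert a A)"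
    proof -
      have "x' ` insert a A = insert y (x ` A)" using img by (simp add: x'_def[symmetric] image_insert) (simp add: x'_def)
      then show ?thesis using x(3) y(2) by (simp add: rv.independent_insertI)
    qed
  qed
qed

lemma indep_ordered:
  fixes f :: "'p \<Rightarrow> real" and rk :: "'p \<Rightarrow> nat"
  assumes "finite A" "inj_on rk A"
    and "\<And>t. t \<in> A \<Longrightarrow> f t \<notin> rv.span (f ` {s\<in>A. rk s < rk t})"
  shows "rv.independent (f ` A) \<and> inj_on f A"
proof -
  have "\<forall>n. rv.independent (f ` {s\<in>A. rk s < n}) \<and> inj_on f {s\<in>A. rk s < n}"
  proof
    fix n show "rv.independent (f ` {s\<in>A. rk s < n}) \<and> inj_on f {s\<in>A. rk s < n}"
    proof (induction n)
      case 0 then show ?case by (simp add: rv.independent_empty)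
    next
      case (Suc n)
      show ?case
      proof (cases "\<exists>t\<in>A. rk t = n")
        case False
        then have "{s\<in>A. rk s < Suc n} = {s\<in>A. rk s < n}" using less_Suc_eq by blast
        then show ?thesis using Suc by simp
      next
        case True
        then obtain t where t: "t \<in> A" "rk t = n" by blast
        have eq: "{s\<in>A. rk s < Suc n} = insert t {s\<in>A. rk s < n}"
        proof (intro set_eqI iffI)
          fix s assume "s \<in> {s\<in>A. rk s < Suc n}"
          then have sA: "s \<in> A" and dis: "rk s < Suc n" by auto
          show "s \<in> insert t {s\<in>A. rk s < n}"
          proof (cases "rk s = n")
            case True
            then have "s = t" using inj_onD[OF assms(2), of s t] t sA by simp
            then show ?thesis by simp
          next
            case False
            then show ?thesis using sA dis by simp
          qed
        next
          fix s assume "s \<in> insert t {s\<in>A. rk s < n}"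
          then show "s \<in> {s\<in>A. rk s < Suc n}" using t by auto
        qed
        have ns: "f t \<notin> rv.span (f ` {s\<in>A. rk s < n})" using assms(3)[OF t(1)] t(2) by simp
        have nn: "f t \<notin> f ` {s\<in>A. rk s < n}"
        proof
          assume "f t \<in> f ` {s\<in>A. rk s < n}"
          then have "f t \<in> rv.span (f ` {s\<in>A. rk s < n})" by (rule rv.span_base)
          with ns show False by contradiction
        qed
        have "rv.independent (f ` insert t {s\<in>A. rk s < n})"
          unfolding image_insert using Suc.IH ns by (intro rv.independent_insertI) auto
        moreover have "inj_on f (insert t {s\<in>A. rk s < n})"
        proof -
          have "f t \<notin> f ` ({s\<in>A. rk s < n} - {t})" using nn by auto
          then show ?thesis using Suc.IH by (simp add: inj_on_insert)
        qed
        ultimately show ?thesis unfolding eq by blast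
      qed
    qed
  qed
  then have H: "rv.independent (f ` {s\<in>A. rk s < Suc (Max (rk ` A))}) \<and> inj_on f {s\<in>A. rk s < Suc (Max (rk ` A))}"
    by blast
  have "{s\<in>A. rk s < Suc (Max (rk ` A))} = A"
    using assms(1) by (auto intro!: le_imp_less_Suc Max_ge)
  then show ?thesis using H by simp
qed


definition ep1 :: "bool \<times> nat \<times> nat \<Rightarrow> nat \<times> nat" where
  "ep1 l = (fst (snd l), snd (snd l))"
definition ep2 :: "bool \<times> nat \<times> nat \<Rightarrow> nat \<times> nat" where
  "ep2 l = (if fst l then (Suc (fst (snd l)), snd (snd l)) else (fst (snd l), Suc (snd (snd l))))"
definition Lab :: "nat \<Rightarrow> (bool \<times> nat \<times> nat) set" where
  "Lab N = {(True,r,c) | r c. r \<le> N \<and> 1 \<le> c \<and> c \<le> N} \<union> {(False,r,c) | r c. 1 \<le> r \<and> r \<le> N \<and> c \<le> N}"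
definition wl :: "nat \<Rightarrow> bool \<times> nat \<times> nat \<Rightarrow> real" where
  "wl N l = 2 * real N ^ 2 + real N - (if fst l then real (fst (snd l)) else real (snd (snd l)))"
definition FL :: "nat \<Rightarrow> nat \<Rightarrow> (bool \<times> nat \<times> nat) set" where
  "FL i j = {(True,i,c) | c. 1 \<le> c \<and> c \<le> j} \<union> {(False,r,j) | r. 1 \<le> r \<and> r \<le> i}"

lemma step_exists:
  assumes "a \<le> b" "f a \<noteq> f b"
  shows "\<exists>r. a \<le> r \<and> r < b \<and> f r \<noteq> f (Suc r)"
  using assms
proof (induction b)
  case 0 then show ?case by simp
next
  case (Suc b)
  show ?case
  proof (cases "a \<le> b \<and> f a \<noteq> f b")
    case True
    then obtain r where "a \<le> r \<and> r < b \<and> f r \<noteq> f (Suc r)" using Suc.IH by blast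
    then show ?thesis by (intro exI[of _ r]) auto
  next
    case False
    then have "a = Suc b \<or> (a \<le> b \<and> f a = f b)" using Suc.prems by auto
    then show ?thesis using Suc.prems by (intro exI[of _ b]) auto
  qed
qed

lemma FL_sum:
  "(\<Sum>l\<in>FL i j. cl l) = (\<Sum>c\<in>{1..j}. cl (True,i,c)) + (\<Sum>r\<in>{1..i}. cl (False,r,j))"
proof -
  have e1: "{(True,i,c) | c. 1 \<le> c \<and> c \<le> j} = (\<lambda>c. (True,i,c)) ` {1..j}" by auto
  have e2: "{(False,r,j) | r. 1 \<le> r \<and> r \<le> i} = (\<lambda>r. (False,r,j)) ` {1..i}" by auto
  have "(\<Sum>l\<in>FL i j. cl l) = (\<Sum>l\<in>(\<lambda>c. (True,i,c)) ` {1..j}. cl l) + (\<Sum>l\<in>(\<lambda>r. (False,r,j)) ` {1..i}. cl l)"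
    unfolding FL_def e1 e2 by (rule sum.union_disjoint) auto
  also have "\<dots> = (\<Sum>c\<in>{1..j}. cl (True,i,c)) + (\<Sum>r\<in>{1..i}. cl (False,r,j))"
    by (subst sum.reindex, simp add: inj_on_def)+ simp
  finally show ?thesis .
qed

lemma core:
  fixes P :: "nat \<times> nat \<Rightarrow> bool" and cl :: "bool \<times> nat \<times> nat \<Rightarrow> real"
  assumes N: "1 \<le> N" and ij: "1 \<le> i" "i \<le> N" "1 \<le> j" "j \<le> N"
    and cb: "\<And>l. l \<in> Lab N \<Longrightarrow> wl N l < cl l \<and> cl l < wl N l + 1"
    and bL: "\<And>r. 1 \<le> r \<Longrightarrow> r \<le> N \<Longrightarrow> P (r,0) = (r \<le> i)"
    and bT: "\<And>c. 1 \<le> c \<Longrightarrow> c \<le> N \<Longrightarrow> P (0,c) = (c \<le> j)"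
    and bB: "\<And>c. 1 \<le> c \<Longrightarrow> c \<le> N \<Longrightarrow> \<not> P (Suc N,c)"
    and bR: "\<And>r. 1 \<le> r \<Longrightarrow> r \<le> N \<Longrightarrow> \<not> P (r,Suc N)"
  shows "(\<Sum>l\<in>FL i j. cl l) \<le> (\<Sum>l\<in>{l\<in>Lab N. P (ep1 l) \<noteq> P (ep2 l)}. cl l)"
proof -
  define Cut where "Cut = {l\<in>Lab N. P (ep1 l) \<noteq> P (ep2 l)}"
  define M :: real where "M = 2 * real N ^ 2"
  have finLab: "finite (Lab N)"
  proof -
    have "Lab N \<subseteq> UNIV \<times> {..N+1} \<times> {..N+1}" unfolding Lab_def by auto
    then show ?thesis by (rule finite_subset) auto
  qed
  have finCut: "finite Cut" unfolding Cut_def using finLab by simp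
  have clM: "\<And>l. l \<in> Lab N \<Longrightarrow> M < cl l"
  proof -
    fix l assume l: "l \<in> Lab N"
    have "M \<le> wl N l" using l unfolding Lab_def wl_def M_def by auto
    then show "M < cl l" using cb[OF l] by linarith
  qed
  have clpos: "\<And>l. l \<in> Lab N \<Longrightarrow> 0 < cl l"
  proof -
    fix l assume l: "l \<in> Lab N"
    have "0 \<le> M" unfolding M_def by simp
    then show "0 < cl l" using clM[OF l] by linarith
  qed
  have colc: "\<forall>c\<in>{1..j}. \<exists>\<rho>. \<rho> \<le> N \<and> P (\<rho>,c) \<noteq> P (Suc \<rho>,c) \<and> (\<not> P (Suc i,c) \<longrightarrow> \<rho> \<le> i)"
  proof
    fix c assume c: "c \<in> {1..j}"
    then have c1: "1 \<le> c" "c \<le> N" using ij by auto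
    show "\<exists>\<rho>. \<rho> \<le> N \<and> P (\<rho>,c) \<noteq> P (Suc \<rho>,c) \<and> (\<not> P (Suc i,c) \<longrightarrow> \<rho> \<le> i)"
    proof (cases "P (Suc i, c)")
      case True
      have "Suc i \<noteq> Suc N" using True bB[OF c1] by auto
      then have "Suc i \<le> Suc N" using ij by simp
      moreover have "P (Suc i, c) \<noteq> P (Suc N, c)" using True bB[OF c1] by simp
      ultimately obtain r where "Suc i \<le> r \<and> r < Suc N \<and> P (r,c) \<noteq> P (Suc r,c)"
        using step_exists[of "Suc i" "Suc N" "\<lambda>r. P (r,c)"] by auto
      then show ?thesis using True by (intro exI[of _ r]) auto
    next
      case False
      have "P (0, c) \<noteq> P (Suc i, c)" using False bT[OF c1] c by simp
      then obtain r where "0 \<le> r \<and> r < Suc i \<and> P (r,c) \<noteq> P (Suc r,c)"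
        using step_exists[of 0 "Suc i" "\<lambda>r. P (r,c)"] by auto
      then show ?thesis using False ij by (intro exI[of _ r]) auto
    qed
  qed
  then obtain \<rho> where rho: "\<And>c. c \<in> {1..j} \<Longrightarrow> \<rho> c \<le> N \<and> P (\<rho> c,c) \<noteq> P (Suc (\<rho> c),c) \<and> (\<not> P (Suc i,c) \<longrightarrow> \<rho> c \<le> i)"
    by metis
  have rowc: "\<forall>r\<in>{1..i}. \<exists>\<sigma>. \<sigma> \<le> N \<and> P (r,\<sigma>) \<noteq> P (r,Suc \<sigma>) \<and> (\<not> P (r,Suc j) \<longrightarrow> \<sigma> \<le> j)"
  proof
    fix r assume r: "r \<in> {1..i}"
    then have r1: "1 \<le> r" "r \<le> N" using ij by auto
    show "\<exists>\<sigma>. \<sigma> \<le> N \<and> P (r,\<sigma>) \<noteq> P (r,Suc \<sigma>) \<and> (\<not> P (r,Suc j) \<longrightarrow> \<sigma> \<le> j)"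
    proof (cases "P (r, Suc j)")
      case True
      have "Suc j \<noteq> Suc N" using True bR[OF r1] by auto
      then have "Suc j \<le> Suc N" using ij by simp
      moreover have "P (r, Suc j) \<noteq> P (r, Suc N)" using True bR[OF r1] by simp
      ultimately obtain s where "Suc j \<le> s \<and> s < Suc N \<and> P (r,s) \<noteq> P (r,Suc s)"
        using step_exists[of "Suc j" "Suc N" "\<lambda>s. P (r,s)"] by auto
      then show ?thesis using True by (intro exI[of _ s]) auto
    next
      case False
      have "P (r, 0) \<noteq> P (r, Suc j)" using False bL[OF r1] r by simp
      then obtain s where "0 \<le> s \<and> s < Suc j \<and> P (r,s) \<noteq> P (r,Suc s)"
        using step_exists[of 0 "Suc j" "\<lambda>s. P (r,s)"] by auto
      then show ?thesis using False ij by (intro exI[of _ s]) auto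
    qed
  qed
  then obtain \<sigma> where sig: "\<And>r. r \<in> {1..i} \<Longrightarrow> \<sigma> r \<le> N \<and> P (r,\<sigma> r) \<noteq> P (r,Suc (\<sigma> r)) \<and> (\<not> P (r,Suc j) \<longrightarrow> \<sigma> r \<le> j)"
    by metis
  define A where "A = (\<lambda>c. (True, \<rho> c, c)) ` {1..j}"
  define B where "B = (\<lambda>r. (False, r, \<sigma> r)) ` {1..i}"
  define dc where "dc c = (if P (Suc i, c) then real N else 0)" for c
  define dr where "dr r = (if P (r, Suc j) then real N else 0)" for r
  have ALab: "A \<subseteq> Cut" unfolding A_def Cut_def Lab_def using rho ij
    by (force simp: ep1_def ep2_def)
  have BLab: "B \<subseteq> Cut" unfolding B_def Cut_def Lab_def using sig ij
    by (force simp: ep1_def ep2_def)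
  have AB: "A \<inter> B = {}" unfolding A_def B_def by auto
  have extra: "\<exists>X. X \<subseteq> Cut \<and> X \<inter> (A \<union> B) = {} \<and> (\<Sum>c\<in>{1..j}. dc c) + (\<Sum>r\<in>{1..i}. dr r) \<le> (\<Sum>l\<in>X. cl l)"
  proof -
    have bnd: "(\<Sum>c\<in>{1..j}. dc c) + (\<Sum>r\<in>{1..i}. dr r) \<le> M"
    proof -
      have "(\<Sum>c\<in>{1..j}. dc c) \<le> (\<Sum>c\<in>{1..j}. real N)" by (rule sum_mono) (simp add: dc_def)
      moreover have "(\<Sum>r\<in>{1..i}. dr r) \<le> (\<Sum>r\<in>{1..i}. real N)" by (rule sum_mono) (simp add: dr_def)
      moreover have "real j * real N + real i * real N \<le> M"
      proof -
        have "real j * real N \<le> real N * real N" "real i * real N \<le> real N * real N"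
          using ij by (simp_all add: mult_right_mono)
        then show ?thesis unfolding M_def by (simp add: power2_eq_square)
      qed
      ultimately show ?thesis by simp
    qed
    show ?thesis
    proof (cases "\<exists>c\<in>{1..j}. P (Suc i, c)")
      case True
      then obtain c where c: "c \<in> {1..j}" "P (Suc i, c)" by blast
      have c1: "1 \<le> c" "c \<le> N" using c ij by auto
      have "Suc i \<noteq> Suc N" using bB[OF c1] c(2) by auto
      then have iN: "Suc i \<le> N" using ij by simp
      have "\<not> P (Suc i, 0)" using bL[of "Suc i"] iN by simp
      then obtain s where s: "0 \<le> s \<and> s < c \<and> P (Suc i,s) \<noteq> P (Suc i,Suc s)"
        using step_exists[of 0 c "\<lambda>s. P (Suc i,s)"] c(2) by auto
      define l where "l = (False, Suc i, s)"
      have lL: "l \<in> Lab N" unfolding l_def Lab_def using s c1 iN by auto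
      have lC: "l \<in> Cut" unfolding Cut_def using lL s by (simp add: l_def ep1_def ep2_def)
      have "l \<notin> A \<union> B" unfolding l_def A_def B_def by auto
      moreover have "M \<le> cl l" using clM[OF lL] by simp
      ultimately show ?thesis using lC bnd by (intro exI[of _ "{l}"]) auto
    next
      case F1: False
      show ?thesis
      proof (cases "\<exists>r\<in>{1..i}. P (r, Suc j)")
        case True
        then obtain r where r: "r \<in> {1..i}" "P (r, Suc j)" by blast
        have r1: "1 \<le> r" "r \<le> N" using r ij by auto
        have "Suc j \<noteq> Suc N" using bR[OF r1] r(2) by auto
        then have jN: "Suc j \<le> N" using ij by simp
        have "\<not> P (0, Suc j)" using bT[of "Suc j"] jN by simp
        then obtain s where s: "0 \<le> s \<and> s < r \<and> P (s, Suc j) \<noteq> P (Suc s, Suc j)"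
          using step_exists[of 0 r "\<lambda>s. P (s, Suc j)"] r(2) by auto
        define l where "l = (True, s, Suc j)"
        have lL: "l \<in> Lab N" unfolding l_def Lab_def using s r1 jN by auto
        have lC: "l \<in> Cut" unfolding Cut_def using lL s by (simp add: l_def ep1_def ep2_def)
        have "l \<notin> A \<union> B" unfolding l_def A_def B_def by auto
        moreover have "M \<le> cl l" using clM[OF lL] by simp
        ultimately show ?thesis using lC bnd by (intro exI[of _ "{l}"]) auto
      next
        case False
        then have "(\<Sum>c\<in>{1..j}. dc c) = 0" "(\<Sum>r\<in>{1..i}. dr r) = 0"
          using F1 by (simp_all add: dc_def dr_def)
        then show ?thesis by (intro exI[of _ "{}"]) auto
      qed
    qed
  qed
  then obtain X where X: "X \<subseteq> Cut" "X \<inter> (A \<union> B) = {}"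
    "(\<Sum>c\<in>{1..j}. dc c) + (\<Sum>r\<in>{1..i}. dr r) \<le> (\<Sum>l\<in>X. cl l)" by blast
  have finX: "finite X" using X(1) finCut finite_subset by blast
  have finA: "finite A" "finite B" unfolding A_def B_def by auto
  have "(\<Sum>l\<in>A \<union> B \<union> X. cl l) \<le> (\<Sum>l\<in>Cut. cl l)"
    using ALab BLab X(1) finCut clpos unfolding Cut_def
    by (intro sum_mono2) (auto simp: Cut_def less_imp_le)
  moreover have "(\<Sum>l\<in>A \<union> B \<union> X. cl l) = (\<Sum>l\<in>A. cl l) + (\<Sum>l\<in>B. cl l) + (\<Sum>l\<in>X. cl l)"
    using finA finX AB X(2) by (simp add: sum.union_disjoint Int_Un_distrib2 inf_commute)
  moreover have "(\<Sum>l\<in>A. cl l) = (\<Sum>c\<in>{1..j}. cl (True, \<rho> c, c))"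
    unfolding A_def by (subst sum.reindex) (auto simp: inj_on_def)
  moreover have "(\<Sum>l\<in>B. cl l) = (\<Sum>r\<in>{1..i}. cl (False, r, \<sigma> r))"
    unfolding B_def by (subst sum.reindex) (auto simp: inj_on_def)
  moreover have "(\<Sum>c\<in>{1..j}. cl (True, i, c) - dc c) \<le> (\<Sum>c\<in>{1..j}. cl (True, \<rho> c, c))"
  proof (rule sum_mono)
    fix c assume c: "c \<in> {1..j}"
    have c1: "1 \<le> c" "c \<le> N" using c ij by auto
    have Li: "(True, i, c) \<in> Lab N" unfolding Lab_def using ij c1 by auto
    have Lr: "(True, \<rho> c, c) \<in> Lab N" unfolding Lab_def using rho[OF c] c1 by auto
    have ui: "cl (True,i,c) < M + real N - real i + 1" using cb[OF Li] by (simp add: wl_def M_def)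
    have lr: "M + real N - real (\<rho> c) < cl (True, \<rho> c, c)" using cb[OF Lr] by (simp add: wl_def M_def)
    show "cl (True, i, c) - dc c \<le> cl (True, \<rho> c, c)"
    proof (cases "P (Suc i, c)")
      case True
      then show ?thesis using ui lr rho[OF c] ij unfolding dc_def by simp
    next
      case False
      then have le: "\<rho> c \<le> i" using rho[OF c] by simp
      show ?thesis
      proof (cases "\<rho> c = i")
        case True then show ?thesis using False by (simp add: dc_def)
      next
        case ne: False
        then have "real (\<rho> c) + 1 \<le> real i" using le by linarith
        then show ?thesis using ui lr False by (simp add: dc_def)
      qed
    qed
  qed
  moreover have "(\<Sum>r\<in>{1..i}. cl (False, r, j) - dr r) \<le> (\<Sum>r\<in>{1..i}. cl (False, r, \<sigma> r))"
  proof (rule sum_mono)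
    fix r assume r: "r \<in> {1..i}"
    have r1: "1 \<le> r" "r \<le> N" using r ij by auto
    have Li: "(False, r, j) \<in> Lab N" unfolding Lab_def using ij r1 by auto
    have Lr: "(False, r, \<sigma> r) \<in> Lab N" unfolding Lab_def using sig[OF r] r1 by auto
    have ui: "cl (False,r,j) < M + real N - real j + 1" using cb[OF Li] by (simp add: wl_def M_def)
    have lr: "M + real N - real (\<sigma> r) < cl (False, r, \<sigma> r)" using cb[OF Lr] by (simp add: wl_def M_def)
    show "cl (False, r, j) - dr r \<le> cl (False, r, \<sigma> r)"
    proof (cases "P (r, Suc j)")
      case True
      then show ?thesis using ui lr sig[OF r] ij unfolding dr_def by simp
    next
      case False
      then have le: "\<sigma> r \<le> j" using sig[OF r] by simp
      show ?thesis
      proof (cases "\<sigma> r = j")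
        case True then show ?thesis using False by (simp add: dr_def)
      next
        case ne: False
        then have "real (\<sigma> r) + 1 \<le> real j" using le by linarith
        then show ?thesis using ui lr False by (simp add: dr_def)
      qed
    qed
  qed
  moreover have "(\<Sum>l\<in>FL i j. cl l) = (\<Sum>c\<in>{1..j}. cl (True,i,c) - dc c) + (\<Sum>r\<in>{1..i}. cl (False,r,j) - dr r)
      + ((\<Sum>c\<in>{1..j}. dc c) + (\<Sum>r\<in>{1..i}. dr r))"
    unfolding FL_sum by (simp add: sum_subtractf)
  ultimately show ?thesis using X(3) unfolding Cut_def by linarith
qed


definition pt :: "nat \<times> nat \<Rightarrow> real^2" where
  "pt p = vector [real (fst p), real (snd p)]"

lemma pt_comp [simp]: "pt p $ 1 = real (fst p)" "pt p $ 2 = real (snd p)"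
  by (simp_all add: pt_def)

lemma pt_inj: "pt p = pt q \<longleftrightarrow> p = q"
proof
  assume "pt p = pt q"
  then have "pt p $ 1 = pt q $ 1" "pt p $ 2 = pt q $ 2" by simp_all
  then show "p = q" by (simp add: prod_eq_iff)
qed simp

lemma pt_eqI: "z $ 1 = real (fst q) \<Longrightarrow> z $ 2 = real (snd q) \<Longrightarrow> z = pt q"
  by (simp add: vec_eq_iff forall_2)

lemma seg_coords:
  assumes "z \<in> closed_segment (pt (ep1 l)) (pt (ep2 l))"
  shows "if fst l then z $ 2 = real (snd (snd l)) \<and> real (fst (snd l)) \<le> z $ 1 \<and> z $ 1 \<le> real (fst (snd l)) + 1
         else z $ 1 = real (fst (snd l)) \<and> real (snd (snd l)) \<le> z $ 2 \<and> z $ 2 \<le> real (snd (snd l)) + 1"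
proof -
  obtain u where u: "0 \<le> u" "u \<le> 1" "z = (1 - u) *\<^sub>R pt (ep1 l) + u *\<^sub>R pt (ep2 l)"
    using assms by (auto simp: in_segment)
  have z1: "z $ 1 = (1 - u) * pt (ep1 l) $ 1 + u * pt (ep2 l) $ 1" using u(3) by simp
  have z2: "z $ 2 = (1 - u) * pt (ep1 l) $ 2 + u * pt (ep2 l) $ 2" using u(3) by simp
  show ?thesis
  proof (cases "fst l")
    case True
    then show ?thesis using z1 z2 u(1,2) by (simp add: ep1_def ep2_def algebra_simps)
  next
    case False
    then show ?thesis using z1 z2 u(1,2) by (simp add: ep1_def ep2_def algebra_simps)
  qed
qed

lemma ends_seg: "pt (ep1 l) \<in> closed_segment (pt (ep1 l)) (pt (ep2 l))"
  "pt (ep2 l) \<in> closed_segment (pt (ep1 l)) (pt (ep2 l))"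
  by simp_all

lemma nat_between:
  fixes a q :: nat
  assumes "real a \<le> real q" "real q \<le> real a + 1"
  shows "q = a \<or> q = Suc a"
  using assms by linarith

lemma lattice_on_seg:
  assumes "pt q \<in> closed_segment (pt (ep1 l)) (pt (ep2 l))"
  shows "q = ep1 l \<or> q = ep2 l"
proof -
  obtain d r c where l: "l = (d, r, c)" by (cases l) auto
  show ?thesis
  proof (cases d)
    case True
    then have "real (snd q) = real c" "real r \<le> real (fst q)" "real (fst q) \<le> real r + 1"
      using seg_coords[OF assms] l by auto
    then have "snd q = c" "fst q = r \<or> fst q = Suc r" using nat_between by auto
    then show ?thesis using True l by (auto simp: ep1_def ep2_def prod_eq_iff)
  next
    case False
    then have "real (fst q) = real r" "real c \<le> real (snd q)" "real (snd q) \<le> real c + 1"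
      using seg_coords[OF assms] l by auto
    then have "fst q = r" "snd q = c \<or> snd q = Suc c" using nat_between by auto
    then show ?thesis using False l by (auto simp: ep1_def ep2_def prod_eq_iff)
  qed
qed

lemma seg_inter:
  assumes "l \<noteq> l'" "z \<in> closed_segment (pt (ep1 l)) (pt (ep2 l))"
    "z \<in> closed_segment (pt (ep1 l')) (pt (ep2 l'))"
  shows "\<exists>q. z = pt q \<and> q \<in> {ep1 l, ep2 l} \<and> q \<in> {ep1 l', ep2 l'}"
proof -
  obtain d r c where l: "l = (d, r, c)" by (cases l) auto
  obtain d' r' c' where l': "l' = (d', r', c')" by (cases l') auto
  note A = seg_coords[OF assms(2)] and B = seg_coords[OF assms(3)]
  show ?thesis
  proof (cases d; cases d')
    assume d: d d'
    then have h: "z $ 2 = real c" "real r \<le> z $ 1" "z $ 1 \<le> real r + 1"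
      "z $ 2 = real c'" "real r' \<le> z $ 1" "z $ 1 \<le> real r' + 1" using A B l l' by auto
    then have cc: "c' = c" by simp
    then have "r \<noteq> r'" using assms(1) l l' d by auto
    then have "r' = Suc r \<or> r = Suc r'" using h by linarith
    then show ?thesis
    proof
      assume rr: "r' = Suc r"
      then have "z = pt (Suc r, c)" using h by (intro pt_eqI) auto
      then show ?thesis using rr cc l l' d by (intro exI[of _ "(Suc r, c)"]) (auto simp: ep1_def ep2_def)
    next
      assume rr: "r = Suc r'"
      then have "z = pt (r, c)" using h by (intro pt_eqI) auto
      then show ?thesis using rr cc l l' d by (intro exI[of _ "(r, c)"]) (auto simp: ep1_def ep2_def)
    qed
  next
    assume d: d "\<not> d'"
    then have h: "z $ 2 = real c" "real r \<le> z $ 1" "z $ 1 \<le> real r + 1"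
      "z $ 1 = real r'" "real c' \<le> z $ 2" "z $ 2 \<le> real c' + 1" using A B l l' by auto
    then have "r' = r \<or> r' = Suc r" "c = c' \<or> c = Suc c'" using nat_between by auto
    moreover have "z = pt (r', c)" using h by (intro pt_eqI) auto
    ultimately show ?thesis using l l' d by (intro exI[of _ "(r', c)"]) (auto simp: ep1_def ep2_def)
  next
    assume d: "\<not> d" "d'"
    then have h: "z $ 1 = real r" "real c \<le> z $ 2" "z $ 2 \<le> real c + 1"
      "z $ 2 = real c'" "real r' \<le> z $ 1" "z $ 1 \<le> real r' + 1" using A B l l' by auto
    then have "r = r' \<or> r = Suc r'" "c' = c \<or> c' = Suc c" using nat_between by auto
    moreover have "z = pt (r, c')" using h by (intro pt_eqI) auto
    ultimately show ?thesis using l l' d by (intro exI[of _ "(r, c')"]) (auto simp: ep1_def ep2_def)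
  next
    assume d: "\<not> d" "\<not> d'"
    then have h: "z $ 1 = real r" "real c \<le> z $ 2" "z $ 2 \<le> real c + 1"
      "z $ 1 = real r'" "real c' \<le> z $ 2" "z $ 2 \<le> real c' + 1" using A B l l' by auto
    then have rr: "r' = r" by simp
    then have "c \<noteq> c'" using assms(1) l l' d by auto
    then have "c' = Suc c \<or> c = Suc c'" using h by linarith
    then show ?thesis
    proof
      assume cc: "c' = Suc c"
      then have "z = pt (r, Suc c)" using h by (intro pt_eqI) auto
      then show ?thesis using rr cc l l' d by (intro exI[of _ "(r, Suc c)"]) (auto simp: ep1_def ep2_def)
    next
      assume cc: "c = Suc c'"
      then have "z = pt (r, c)" using h by (intro pt_eqI) auto
      then show ?thesis using rr cc l l' d by (intro exI[of _ "(r, c)"]) (auto simp: ep1_def ep2_def)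
    qed
  qed
qed


lemma sum_notin_span:
  fixes cl :: "'l \<Rightarrow> real"
  assumes fin: "finite L" and inj: "inj_on cl L" and ind: "rv.independent (cl ` L)"
    and k: "k \<in> F" and F: "F \<subseteq> L" and G: "\<And>s. s \<in> B \<Longrightarrow> G s \<subseteq> L - {k}"
  shows "(\<Sum>l\<in>F. cl l) \<notin> rv.span ((\<lambda>s. \<Sum>l\<in>G s. cl l) ` B)"
proof
  let ?T = "rv.span (cl ` (L - {k}))"
  assume a: "(\<Sum>l\<in>F. cl l) \<in> rv.span ((\<lambda>s. \<Sum>l\<in>G s. cl l) ` B)"
  have "(\<lambda>s. \<Sum>l\<in>G s. cl l) ` B \<subseteq> ?T"
  proof
    fix x assume "x \<in> (\<lambda>s. \<Sum>l\<in>G s. cl l) ` B"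
    then obtain s where s: "s \<in> B" "x = (\<Sum>l\<in>G s. cl l)" by blast
    show "x \<in> ?T" unfolding s(2)
    proof (rule rv.span_sum)
      fix l assume "l \<in> G s"
      then have "cl l \<in> cl ` (L - {k})" using G[OF s(1)] by blast
      then show "cl l \<in> ?T" by (rule rv.span_base)
    qed
  qed
  then have "rv.span ((\<lambda>s. \<Sum>l\<in>G s. cl l) ` B) \<subseteq> ?T" by (intro rv.span_minimal) auto
  with a have s1: "(\<Sum>l\<in>F. cl l) \<in> ?T" by blast
  have s2: "(\<Sum>l\<in>F - {k}. cl l) \<in> ?T"
  proof (rule rv.span_sum)
    fix l assume "l \<in> F - {k}"
    then have "cl l \<in> cl ` (L - {k})" using F by blast
    then show "cl l \<in> ?T" by (rule rv.span_base)
  qed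
  have finF: "finite F" using F fin finite_subset by blast
  have "(\<Sum>l\<in>F. cl l) = cl k + (\<Sum>l\<in>F - {k}. cl l)" using k finF by (simp add: sum.remove)
  then have "cl k = (\<Sum>l\<in>F. cl l) - (\<Sum>l\<in>F - {k}. cl l)" by simp
  then have ck: "cl k \<in> ?T" using rv.span_diff[OF s1 s2] by simp
  have "cl ` (L - {k}) = cl ` L - {cl k}" using inj k F by (auto simp: inj_on_def)
  then have "cl k \<in> rv.span (cl ` L - {cl k})" using ck by simp
  moreover have "cl k \<in> cl ` L" using k F by blast
  ultimately have "rv.dependent (cl ` L)" unfolding rv.dependent_def by blast
  with ind show False by simp
qed

definition vid :: "nat \<times> nat \<Rightarrow> nat" where "vid = prod_encode"
definition emb :: "bool \<times> nat \<times> nat \<Rightarrow> nat set" where "emb l = {vid (ep1 l), vid (ep2 l)}"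
definition GridP :: "nat \<Rightarrow> (nat \<times> nat) set" where
  "GridP N = {(r,c). 1 \<le> r \<and> r \<le> N \<and> 1 \<le> c \<and> c \<le> N}"
definition TermP :: "nat \<Rightarrow> nat \<Rightarrow> (nat \<times> nat) set" where
  "TermP N \<rho> = {(r,0)|r. 1\<le>r \<and> r\<le>N} \<union> {(0,c)|c. 1\<le>c \<and> c\<le>N} \<union> {(Suc N,c)|c. 1\<le>c \<and> c\<le>N}
      \<union> {(r,Suc N)|r. 1\<le>r \<and> r\<le>N} \<union> {(N+2+t,0)|t. t<\<rho>}"
definition SP :: "nat \<Rightarrow> nat \<Rightarrow> (nat \<times> nat) set" where
  "SP i j = {(r,0)|r. 1\<le>r \<and> r\<le>i} \<union> {(0,c)|c. 1\<le>c \<and> c\<le>j}"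
definition cfun :: "(bool \<times> nat \<times> nat \<Rightarrow> real) \<Rightarrow> nat set \<Rightarrow> real" where
  "cfun cl e = cl (inv emb e)"

lemma vid_inj [simp]: "vid p = vid q \<longleftrightarrow> p = q"
  by (simp add: vid_def)

lemma ep_ne: "ep1 l \<noteq> ep2 l"
  by (auto simp: ep1_def ep2_def prod_eq_iff)

lemma ep2_sum: "fst (ep2 l) + snd (ep2 l) = Suc (fst (ep1 l) + snd (ep1 l))"
  by (auto simp: ep1_def ep2_def)

lemma emb_inj: "inj emb"
proof (rule injI)
  fix l l' assume "emb l = emb l'"
  then have "(ep1 l = ep1 l' \<and> ep2 l = ep2 l') \<or> (ep1 l = ep2 l' \<and> ep2 l = ep1 l')"
    unfolding emb_def by (auto simp: doubleton_eq_iff)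
  moreover have "\<not> (ep1 l = ep2 l' \<and> ep2 l = ep1 l')"
    using ep2_sum[of l] ep2_sum[of l'] by auto
  ultimately have e: "ep1 l = ep1 l'" "ep2 l = ep2 l'" by auto
  obtain d r c where l: "l = (d,r,c)" by (cases l) auto
  obtain d' r' c' where l': "l' = (d',r',c')" by (cases l') auto
  show "l = l'" using e l l' by (cases d; cases d') (auto simp: ep1_def ep2_def)
qed

lemma cfun_emb [simp]: "cfun cl (emb l) = cl l"
  by (simp add: cfun_def inv_f_f[OF emb_inj])

lemma card_emb: "card (emb l) = 2"
  using ep_ne[of l] by (simp add: emb_def)

lemma card_int_one: "a \<noteq> b \<Longrightarrow> card ({a,b} \<inter> W) = 1 \<longleftrightarrow> (a \<in> W) \<noteq> (b \<in> W)"
  by (cases "a \<in> W"; cases "b \<in> W") auto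

lemma finite_Lab: "finite (Lab N)"
proof -
  have "Lab N \<subseteq> UNIV \<times> {..N+1} \<times> {..N+1}" unfolding Lab_def by auto
  then show ?thesis by (rule finite_subset) auto
qed

lemma finite_AllP: "finite (GridP N \<union> TermP N \<rho>)"
proof -
  have "GridP N \<union> TermP N \<rho> \<subseteq> {..N+2+\<rho>} \<times> {..N+1}" unfolding GridP_def TermP_def by auto
  then show ?thesis by (rule finite_subset) auto
qed

lemma ep_AllP:
  assumes "l \<in> Lab N"
  shows "ep1 l \<in> GridP N \<union> TermP N \<rho>" "ep2 l \<in> GridP N \<union> TermP N \<rho>"
proof -
  obtain d r c where l: "l = (d,r,c)" by (cases l) auto
  show "ep1 l \<in> GridP N \<union> TermP N \<rho>"
    using assms l by (cases d; cases r; cases c) (auto simp: Lab_def GridP_def TermP_def ep1_def)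
  show "ep2 l \<in> GridP N \<union> TermP N \<rho>"
  proof (cases d)
    case True
    then show ?thesis using assms l
      by (cases "Suc r \<le> N") (auto simp: Lab_def GridP_def TermP_def ep2_def)
  next
    case False
    then show ?thesis using assms l
      by (cases "Suc c \<le> N") (auto simp: Lab_def GridP_def TermP_def ep2_def)
  qed
qed

lemma cut_cost_lab:
  "cut_cost (emb ` Lab N) (cfun cl) W = (\<Sum>l\<in>{l\<in>Lab N. (vid (ep1 l) \<in> W) \<noteq> (vid (ep2 l) \<in> W)}. cl l)"
proof -
  have "{e\<in>emb ` Lab N. card (e \<inter> W) = 1} = emb ` {l\<in>Lab N. (vid (ep1 l) \<in> W) \<noteq> (vid (ep2 l) \<in> W)}"
  proof -
    have "\<And>l. card (emb l \<inter> W) = 1 \<longleftrightarrow> (vid (ep1 l) \<in> W) \<noteq> (vid (ep2 l) \<in> W)"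
      unfolding emb_def by (rule card_int_one) (simp add: ep_ne)
    then show ?thesis by auto
  qed
  then show ?thesis unfolding cut_cost_def
    by (simp add: sum.reindex inj_on_subset[OF emb_inj])
qed


lemma term_mem:
  assumes "p \<in> T" "W \<inter> vid ` T = vid ` X"
  shows "(vid p \<in> W) = (p \<in> X)"
proof -
  have "(vid p \<in> W) = (vid p \<in> W \<inter> vid ` T)" using assms(1) by auto
  also have "\<dots> = (p \<in> X)" using assms(2) by auto
  finally show ?thesis .
qed

lemma SP_sub: "i \<le> N \<Longrightarrow> j \<le> N \<Longrightarrow> SP i j \<subseteq> TermP N \<rho>"
  unfolding SP_def TermP_def by auto

lemma G_lower:
  assumes N: "1 \<le> N" and ij: "1 \<le> i" "i \<le> N" "1 \<le> j" "j \<le> N"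
    and cb: "\<And>l. l \<in> Lab N \<Longrightarrow> wl N l < cl l \<and> cl l < wl N l + 1"
    and sep: "separating (vid ` (GridP N \<union> TermP N \<rho>)) (vid ` TermP N \<rho>) (vid ` SP i j) W"
  shows "(\<Sum>l\<in>FL i j. cl l) \<le> cut_cost (emb ` Lab N) (cfun cl) W"
proof -
  define P where "P p = (vid p \<in> W)" for p
  have cc: "cut_cost (emb ` Lab N) (cfun cl) W = (\<Sum>l\<in>{l\<in>Lab N. P (ep1 l) \<noteq> P (ep2 l)}. cl l)"
    unfolding cut_cost_lab P_def ..
  have Tsub: "SP i j \<subseteq> TermP N \<rho>" using SP_sub ij by blast
  have mem1: "(r,0) \<in> TermP N \<rho>" "(0,c) \<in> TermP N \<rho>" "(Suc N, c) \<in> TermP N \<rho>" "(r, Suc N) \<in> TermP N \<rho>"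
    if "1 \<le> r" "r \<le> N" "1 \<le> c" "c \<le> N" for r c
    using that unfolding TermP_def by auto
  have spL: "((r,0) \<in> SP i j) = (r \<le> i)" if "1 \<le> r" for r using that by (auto simp: SP_def)
  have spT: "((0,c) \<in> SP i j) = (c \<le> j)" if "1 \<le> c" for c using that by (auto simp: SP_def)
  have spB: "(Suc N, c) \<notin> SP i j" if "1 \<le> c" for c using that by (auto simp: SP_def)
  have spR: "(r, Suc N) \<notin> SP i j" for r using ij by (auto simp: SP_def)
  from sep have "W \<inter> vid ` TermP N \<rho> = vid ` SP i j \<or> W \<inter> vid ` TermP N \<rho> = vid ` TermP N \<rho> - vid ` SP i j"
    unfolding separating_def by blast
  then show ?thesis
  proof
    assume h: "W \<inter> vid ` TermP N \<rho> = vid ` SP i j"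
    have Pt: "P p = (p \<in> SP i j)" if "p \<in> TermP N \<rho>" for p unfolding P_def by (rule term_mem[OF that h])
    have "(\<Sum>l\<in>FL i j. cl l) \<le> (\<Sum>l\<in>{l\<in>Lab N. P (ep1 l) \<noteq> P (ep2 l)}. cl l)"
    proof (rule core[OF N ij cb])
      show "P (r,0) = (r \<le> i)" if "1 \<le> r" "r \<le> N" for r using that Pt mem1 spL by simp
      show "P (0,c) = (c \<le> j)" if "1 \<le> c" "c \<le> N" for c using that Pt mem1 spT by simp
      show "\<not> P (Suc N,c)" if "1 \<le> c" "c \<le> N" for c using that Pt mem1 spB by simp
      show "\<not> P (r,Suc N)" if "1 \<le> r" "r \<le> N" for r using that Pt mem1 spR by simp
    qed auto
    then show ?thesis using cc by simp
  next
    assume h0: "W \<inter> vid ` TermP N \<rho> = vid ` TermP N \<rho> - vid ` SP i j"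
    have h: "W \<inter> vid ` TermP N \<rho> = vid ` (TermP N \<rho> - SP i j)"
      using h0 by (simp add: image_set_diff inj_on_def)
    have Pt: "(\<not> P p) = (p \<in> SP i j)" if "p \<in> TermP N \<rho>" for p
      unfolding P_def using term_mem[OF that h] that by simp
    have "(\<Sum>l\<in>FL i j. cl l) \<le> (\<Sum>l\<in>{l\<in>Lab N. (\<not> P (ep1 l)) \<noteq> (\<not> P (ep2 l))}. cl l)"
    proof (rule core[OF N ij cb])
      show "(\<not> P (r,0)) = (r \<le> i)" if "1 \<le> r" "r \<le> N" for r using that Pt mem1 spL by simp
      show "(\<not> P (0,c)) = (c \<le> j)" if "1 \<le> c" "c \<le> N" for c using that Pt mem1 spT by simp
      show "\<not> \<not> P (Suc N,c)" if "1 \<le> c" "c \<le> N" for c using that Pt mem1 spB by simp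
      show "\<not> \<not> P (r,Suc N)" if "1 \<le> r" "r \<le> N" for r using that Pt mem1 spR by simp
    qed auto
    then show ?thesis using cc by simp
  qed
qed

lemma G_W0:
  fixes N \<rho> :: nat and cl :: "bool \<times> nat \<times> nat \<Rightarrow> real"
  assumes ij: "1 \<le> i" "i \<le> N" "1 \<le> j" "j \<le> N"
  defines "W0 \<equiv> vid ` {p \<in> GridP N \<union> TermP N \<rho>. fst p \<le> i \<and> snd p \<le> j}"
  shows "separating (vid ` (GridP N \<union> TermP N \<rho>)) (vid ` TermP N \<rho>) (vid ` SP i j) W0"
    and "cut_cost (emb ` Lab N) (cfun cl) W0 = (\<Sum>l\<in>FL i j. cl l)"
proof -
  have "W0 \<inter> vid ` TermP N \<rho> = vid ` ({p \<in> GridP N \<union> TermP N \<rho>. fst p \<le> i \<and> snd p \<le> j} \<inter> TermP N \<rho>)"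
    unfolding W0_def by (simp add: image_Int inj_on_def)
  also have "{p \<in> GridP N \<union> TermP N \<rho>. fst p \<le> i \<and> snd p \<le> j} \<inter> TermP N \<rho> = SP i j"
    using ij unfolding SP_def TermP_def by auto
  finally show "separating (vid ` (GridP N \<union> TermP N \<rho>)) (vid ` TermP N \<rho>) (vid ` SP i j) W0"
    unfolding separating_def W0_def by auto
  have mem: "(vid p \<in> W0) = (fst p \<le> i \<and> snd p \<le> j)" if "p \<in> GridP N \<union> TermP N \<rho>" for p
    unfolding W0_def using that by auto
  have "{l\<in>Lab N. (vid (ep1 l) \<in> W0) \<noteq> (vid (ep2 l) \<in> W0)}
      = {l\<in>Lab N. (fst (ep1 l) \<le> i \<and> snd (ep1 l) \<le> j) \<noteq> (fst (ep2 l) \<le> i \<and> snd (ep2 l) \<le> j)}"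
    using mem ep_AllP by blast
  also have "\<dots> = FL i j"
  proof (intro set_eqI iffI)
    fix l assume "l \<in> {l\<in>Lab N. (fst (ep1 l) \<le> i \<and> snd (ep1 l) \<le> j) \<noteq> (fst (ep2 l) \<le> i \<and> snd (ep2 l) \<le> j)}"
    then show "l \<in> FL i j"
      by (cases l) (auto simp: Lab_def FL_def ep1_def ep2_def split: if_splits)
  next
    fix l assume "l \<in> FL i j"
    then show "l \<in> {l\<in>Lab N. (fst (ep1 l) \<le> i \<and> snd (ep1 l) \<le> j) \<noteq> (fst (ep2 l) \<le> i \<and> snd (ep2 l) \<le> j)}"
      using ij by (auto simp: Lab_def FL_def ep1_def ep2_def)
  qed
  finally show "cut_cost (emb ` Lab N) (cfun cl) W0 = (\<Sum>l\<in>FL i j. cl l)"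
    unfolding cut_cost_lab by simp
qed

lemma G_mincut:
  assumes N: "1 \<le> N" and ij: "1 \<le> i" "i \<le> N" "1 \<le> j" "j \<le> N"
    and cb: "\<And>l. l \<in> Lab N \<Longrightarrow> wl N l < cl l \<and> cl l < wl N l + 1"
  shows "mincut (vid ` (GridP N \<union> TermP N \<rho>)) (emb ` Lab N) (cfun cl) (vid ` TermP N \<rho>) (vid ` SP i j)
     = (\<Sum>l\<in>FL i j. cl l)"
  unfolding mincut_def
proof (rule Min_eqI)
  let ?V = "vid ` (GridP N \<union> TermP N \<rho>)"
  have "{cut_cost (emb ` Lab N) (cfun cl) W |W. separating ?V (vid ` TermP N \<rho>) (vid ` SP i j) W}
     \<subseteq> (\<lambda>W. cut_cost (emb ` Lab N) (cfun cl) W) ` Pow ?V"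
    unfolding separating_def by auto
  moreover have "finite (Pow ?V)" using finite_AllP by simp
  ultimately show "finite {cut_cost (emb ` Lab N) (cfun cl) W |W. separating ?V (vid ` TermP N \<rho>) (vid ` SP i j) W}"
    by (meson finite_imageI finite_subset)
  show "\<And>y. y \<in> {cut_cost (emb ` Lab N) (cfun cl) W |W. separating ?V (vid ` TermP N \<rho>) (vid ` SP i j) W}
      \<Longrightarrow> (\<Sum>l\<in>FL i j. cl l) \<le> y"
    using G_lower[OF N ij cb] by blast
  show "(\<Sum>l\<in>FL i j. cl l) \<in> {cut_cost (emb ` Lab N) (cfun cl) W |W. separating ?V (vid ` TermP N \<rho>) (vid ` SP i j) W}"
  proof -
    have "separating ?V (vid ` TermP N \<rho>) (vid ` SP i j) (vid ` {p \<in> GridP N \<union> TermP N \<rho>. fst p \<le> i \<and> snd p \<le> j})"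
      "cut_cost (emb ` Lab N) (cfun cl) (vid ` {p \<in> GridP N \<union> TermP N \<rho>. fst p \<le> i \<and> snd p \<le> j}) = (\<Sum>l\<in>FL i j. cl l)"
      using G_W0[OF ij] by blast+
    then show ?thesis by (metis (mono_tags, lifting) mem_Collect_eq)
  qed
qed

lemma mincut_in_span:
  assumes net: "network V' E' c'" and SQ: "S \<subseteq> Q" and QV: "Q \<subseteq> V'"
  shows "mincut V' E' c' Q S \<in> rv.span (c' ` E')"
proof -
  let ?A = "{cut_cost E' c' W |W. separating V' Q S W}"
  have finV: "finite V'" using net unfolding network_def graph_def by blast
  have "?A \<subseteq> (\<lambda>W. cut_cost E' c' W) ` Pow V'" unfolding separating_def by auto
  then have fin: "finite ?A" using finV by (meson finite_imageI finite_subset finite_Pow_iff)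
  have "separating V' Q S S" using SQ QV unfolding separating_def by auto
  then have ne: "?A \<noteq> {}" by blast
  have "Min ?A \<in> ?A" using fin ne by (rule Min_in)
  then obtain W where W: "Min ?A = cut_cost E' c' W" by blast
  have "cut_cost E' c' W \<in> rv.span (c' ` E')" unfolding cut_cost_def
  proof (rule rv.span_sum)
    fix e assume "e \<in> {e \<in> E'. card (e \<inter> W) = 1}"
    then have "c' e \<in> c' ` E'" by blast
    then show "c' e \<in> rv.span (c' ` E')" by (rule rv.span_base)
  qed
  then show ?thesis unfolding mincut_def W .
qed


lemma card_TermP: "card (TermP N \<rho>) = 4 * N + \<rho>"
proof -
  define A1 where "A1 = (\<lambda>r. (r,0::nat)) ` {1..N}"
  define A2 where "A2 = (\<lambda>c. (0::nat,c)) ` {1..N}"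
  define A3 where "A3 = (\<lambda>c. (Suc N,c)) ` {1..N}"
  define A4 where "A4 = (\<lambda>r. (r,Suc N)) ` {1..N}"
  define A5 where "A5 = (\<lambda>t. (N+2+t,0::nat)) ` {..<\<rho>}"
  have eq: "TermP N \<rho> = A1 \<union> A2 \<union> A3 \<union> A4 \<union> A5"
    unfolding TermP_def A1_def A2_def A3_def A4_def A5_def by auto
  have c1: "card A1 = N" unfolding A1_def by (subst card_image) (auto simp: inj_on_def)
  have c2: "card A2 = N" unfolding A2_def by (subst card_image) (auto simp: inj_on_def)
  have c3: "card A3 = N" unfolding A3_def by (subst card_image) (auto simp: inj_on_def)
  have c4: "card A4 = N" unfolding A4_def by (subst card_image) (auto simp: inj_on_def)
  have c5: "card A5 = \<rho>" unfolding A5_def by (subst card_image) (auto simp: inj_on_def)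
  have f: "finite A1" "finite A2" "finite A3" "finite A4" "finite A5"
    unfolding A1_def A2_def A3_def A4_def A5_def by auto
  have d1: "A1 \<inter> A2 = {}" unfolding A1_def A2_def by auto
  have d2: "(A1 \<union> A2) \<inter> A3 = {}" unfolding A1_def A2_def A3_def by auto
  have d3: "(A1 \<union> A2 \<union> A3) \<inter> A4 = {}" unfolding A1_def A2_def A3_def A4_def by auto
  have d4: "(A1 \<union> A2 \<union> A3 \<union> A4) \<inter> A5 = {}" unfolding A1_def A2_def A3_def A4_def A5_def by auto
  have "card (A1 \<union> A2 \<union> A3 \<union> A4 \<union> A5) = card A1 + card A2 + card A3 + card A4 + card A5"
    using f d1 d2 d3 d4 by (simp add: card_Un_disjoint)
  then show ?thesis using eq c1 c2 c3 c4 c5 by simp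
qed

lemma f_vid [simp]: "pt (prod_decode (vid p)) = pt p"
  by (simp add: vid_def)

lemma seg_emb:
  "closed_segment (pt (prod_decode (Min (emb l)))) (pt (prod_decode (Max (emb l))))
   = closed_segment (pt (ep1 l)) (pt (ep2 l))"
proof (cases "vid (ep1 l) < vid (ep2 l)")
  case True
  then show ?thesis by (simp add: emb_def min_def max_def)
next
  case False
  moreover have "vid (ep1 l) \<noteq> vid (ep2 l)" using ep_ne[of l] by simp
  ultimately have "vid (ep2 l) < vid (ep1 l)" by linarith
  then show ?thesis by (simp add: emb_def min_def max_def closed_segment_commute)
qed

lemma ends_emb:
  "{pt (prod_decode (Min (emb l))), pt (prod_decode (Max (emb l)))} = {pt (ep1 l), pt (ep2 l)}"
  by (cases "vid (ep1 l) < vid (ep2 l)") (auto simp: emb_def min_def max_def)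

lemma planar_grid: "planar (vid ` (GridP N \<union> TermP N \<rho>)) (emb ` Lab N)"
  unfolding planar_def
proof (intro exI conjI)
  let ?V = "vid ` (GridP N \<union> TermP N \<rho>)"
  define f where "f v = pt (prod_decode v)" for v
  define \<gamma> where "\<gamma> e = linepath (f (Min e)) (f (Max e))" for e
  have fv: "f (vid p) = pt p" for p by (simp add: f_def)
  show "inj_on f ?V" by (auto simp: inj_on_def fv pt_inj)
  have fe: "f ` emb l = {pt (ep1 l), pt (ep2 l)}" for l by (simp add: emb_def fv)
  have pim: "path_image (\<gamma> (emb l)) = closed_segment (pt (ep1 l)) (pt (ep2 l))" for l
    using seg_emb[of l] by (simp add: \<gamma>_def f_def)
  show "\<forall>e\<in>emb ` Lab N. arc (\<gamma> e) \<and> {pathstart (\<gamma> e), pathfinish (\<gamma> e)} = f ` e \<and>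
      path_image (\<gamma> e) \<inter> f ` ?V = f ` e"
  proof
    fix e assume "e \<in> emb ` Lab N"
    then obtain l where l: "l \<in> Lab N" "e = emb l" by blast
    have ne: "f (Min e) \<noteq> f (Max e)"
    proof
      assume "f (Min e) = f (Max e)"
      then have "{f (Min e), f (Max e)} = {f (Min e)}" by simp
      then have "{pt (ep1 l), pt (ep2 l)} = {f (Min e)}" using ends_emb[of l] l by (simp add: f_def)
      then have "pt (ep1 l) = f (Min e)" "pt (ep2 l) = f (Min e)" by blast+
      then show False using ep_ne[of l] pt_inj by metis
    qed
    show "arc (\<gamma> e) \<and> {pathstart (\<gamma> e), pathfinish (\<gamma> e)} = f ` e \<and> path_image (\<gamma> e) \<inter> f ` ?V = f ` e"
    proof (intro conjI)
      show "arc (\<gamma> e)" unfolding \<gamma>_def using ne by (simp add: arc_linepath)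
      have "{pathstart (\<gamma> e), pathfinish (\<gamma> e)} = {f (Min e), f (Max e)}" by (simp add: \<gamma>_def)
      also have "\<dots> = {pt (ep1 l), pt (ep2 l)}" using ends_emb[of l] l by (simp add: f_def)
      also have "\<dots> = f ` e" using fe l by simp
      finally show "{pathstart (\<gamma> e), pathfinish (\<gamma> e)} = f ` e" .
      show "path_image (\<gamma> e) \<inter> f ` ?V = f ` e"
      proof
        show "path_image (\<gamma> e) \<inter> f ` ?V \<subseteq> f ` e"
        proof
          fix z assume z: "z \<in> path_image (\<gamma> e) \<inter> f ` ?V"
          then obtain q where q: "z = pt q" by (auto simp: fv)
          have "pt q \<in> closed_segment (pt (ep1 l)) (pt (ep2 l))" using z q pim l by simp
          then have "q = ep1 l \<or> q = ep2 l" by (rule lattice_on_seg)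
          then show "z \<in> f ` e" using q l fe by auto
        qed
        show "f ` e \<subseteq> path_image (\<gamma> e) \<inter> f ` ?V"
        proof
          fix x assume "x \<in> f ` e"
          then have x: "x = pt (ep1 l) \<or> x = pt (ep2 l)" using fe l by auto
          have "pt (ep1 l) \<in> f ` ?V" "pt (ep2 l) \<in> f ` ?V"
            using ep_AllP[OF l(1), of \<rho>] fv by (metis image_eqI)+
          moreover have "x \<in> path_image (\<gamma> e)" using x pim l ends_seg by auto
          ultimately show "x \<in> path_image (\<gamma> e) \<inter> f ` ?V" using x by auto
        qed
      qed
    qed
  qed
  show "\<forall>e\<in>emb ` Lab N. \<forall>e'\<in>emb ` Lab N. e \<noteq> e' \<longrightarrow> path_image (\<gamma> e) \<inter> path_image (\<gamma> e') \<subseteq> f ` (e \<inter> e')"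
  proof (intro ballI impI subsetI)
    fix e e' z assume a: "e \<in> emb ` Lab N" "e' \<in> emb ` Lab N" "e \<noteq> e'" "z \<in> path_image (\<gamma> e) \<inter> path_image (\<gamma> e')"
    obtain l where l1: "e = emb l" using a(1) by blast
    obtain l' where l2: "e' = emb l'" using a(2) by blast
    have l: "e = emb l" "e' = emb l'" "l \<noteq> l'"
      "z \<in> closed_segment (pt (ep1 l)) (pt (ep2 l))" "z \<in> closed_segment (pt (ep1 l')) (pt (ep2 l'))"
      using l1 l2 a(3,4) pim by auto
    then obtain q where q: "z = pt q" "q \<in> {ep1 l, ep2 l}" "q \<in> {ep1 l', ep2 l'}"
      using seg_inter by blast
    then have "vid q \<in> e \<inter> e'" using l by (auto simp: emb_def)
    then show "z \<in> f ` (e \<inter> e')" using q fv by (metis image_eqI)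
  qed
qed

lemma network_grid:
  assumes cb: "\<And>l. l \<in> Lab N \<Longrightarrow> wl N l < cl l"
  shows "network (vid ` (GridP N \<union> TermP N \<rho>)) (emb ` Lab N) (cfun cl)"
  unfolding network_def graph_def
proof (intro conjI ballI)
  show "finite (vid ` (GridP N \<union> TermP N \<rho>))" using finite_AllP by simp
  fix e assume "e \<in> emb ` Lab N"
  then obtain l where l: "l \<in> Lab N" "e = emb l" by blast
  show "e \<subseteq> vid ` (GridP N \<union> TermP N \<rho>)" using ep_AllP[OF l(1)] l by (auto simp: emb_def)
  show "card e = 2" using l card_emb by simp
  have "0 \<le> wl N l"
  proof -
    obtain d r c where lr: "l = (d,r,c)" by (cases l) auto
    have "r \<le> N" "c \<le> N" using l(1) lr unfolding Lab_def by auto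
    then have h1: "real r \<le> real N" "real c \<le> real N" by simp_all
    have h2: "0 \<le> real N ^ 2" by simp
    have h3: "real r \<le> 2 * real N ^ 2 + real N" "real c \<le> 2 * real N ^ 2 + real N"
      using h1 h2 by linarith+
    show ?thesis unfolding wl_def lr using h3 by (cases d) simp_all
  qed
  then show "0 < cfun cl e" using cb[OF l(1)] l by simp
qed


lemma key_bound:
  fixes N \<rho> :: nat and cl :: "bool \<times> nat \<times> nat \<Rightarrow> real"
  assumes N: "1 \<le> N"
    and cb: "\<And>l. l \<in> Lab N \<Longrightarrow> wl N l < cl l \<and> cl l < wl N l + 1"
    and inj: "inj_on cl (Lab N)" and ind: "rv.independent (cl ` Lab N)"
    and mim: "mimicking (vid ` (GridP N \<union> TermP N \<rho>)) (emb ` Lab N) (cfun cl) (vid ` TermP N \<rho>) V' E' c'"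
  shows "N ^ 2 \<le> card E'"
proof -
  let ?V = "vid ` (GridP N \<union> TermP N \<rho>)" and ?Q = "vid ` TermP N \<rho>"
  define A where "A = {1..N} \<times> {1..N}"
  define m where "m t = (\<Sum>l\<in>FL (fst t) (snd t). cl l)" for t
  define rk where "rk t = fst t + snd t * (N + 1)" for t
  have net: "network V' E' c'" and QV: "?Q \<subseteq> V'" using mim unfolding mimicking_def by auto
  have finE: "finite E'"
  proof -
    have "finite V'" "\<forall>e\<in>E'. e \<subseteq> V'" using net unfolding network_def graph_def by auto
    then show ?thesis by (meson Pow_iff finite_Pow_iff finite_subset subsetI)
  qed
  have finA: "finite A" unfolding A_def by simp
  have injrk: "inj_on rk A"
  proof (rule inj_onI)
    fix s t assume st: "s \<in> A" "t \<in> A" "rk s = rk t"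
    then have "fst s < N + 1" "fst t < N + 1" unfolding A_def by auto
    have md: "(a + b * (N + 1)) mod (N + 1) = a" "(a + b * (N + 1)) div (N + 1) = b" if "a < N + 1" for a b :: nat
    proof -
      show "(a + b * (N + 1)) mod (N + 1) = a" unfolding mod_mult_self1 using that by (rule mod_less)
      have "(a + b * (N + 1)) div (N + 1) = b + a div (N + 1)" by (rule div_mult_self1) simp
      then show "(a + b * (N + 1)) div (N + 1) = b" using that by simp
    qed
    have "fst s = rk s mod (N + 1)" "snd s = rk s div (N + 1)"
      using md[OF \<open>fst s < N + 1\<close>] unfolding rk_def by simp_all
    moreover have "fst t = rk t mod (N + 1)" "snd t = rk t div (N + 1)"
      using md[OF \<open>fst t < N + 1\<close>] unfolding rk_def by simp_all
    ultimately have "fst s = fst t \<and> snd s = snd t" using st(3) by simp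
    then show "s = t" by (simp add: prod_eq_iff)
  qed
  have FLsub: "FL i j \<subseteq> Lab N" if "i \<le> N" "j \<le> N" for i j
    using that unfolding FL_def Lab_def by auto
  have tri: "m t \<notin> rv.span (m ` {s\<in>A. rk s < rk t})" if t: "t \<in> A" for t
  proof -
    obtain i j where tij: "t = (i,j)" by (cases t) auto
    have ij: "1 \<le> i" "i \<le> N" "1 \<le> j" "j \<le> N" using t tij unfolding A_def by auto
    have "(\<Sum>l\<in>FL i j. cl l) \<notin> rv.span ((\<lambda>s. \<Sum>l\<in>FL (fst s) (snd s). cl l) ` {s\<in>A. rk s < rk t})"
    proof (rule sum_notin_span[OF finite_Lab inj ind])
      show "(True, i, j) \<in> FL i j" using ij unfolding FL_def by auto
      show "FL i j \<subseteq> Lab N" using ij FLsub by simp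
      fix s assume s: "s \<in> {s\<in>A. rk s < rk t}"
      obtain i' j' where sij: "s = (i',j')" by (cases s) auto
      have ij': "i' \<le> N" "j' \<le> N" using s sij unfolding A_def by auto
      have "(True, i, j) \<notin> FL i' j'"
      proof
        assume "(True, i, j) \<in> FL i' j'"
        then have e1: "i' = i" and e2: "j \<le> j'" unfolding FL_def by auto
        have "j * (N + 1) \<le> j' * (N + 1)" using e2 by (rule mult_le_mono1)
        then have "rk t \<le> rk s" using tij sij e1 unfolding rk_def by simp
        then show False using s by simp
      qed
      then show "FL (fst s) (snd s) \<subseteq> Lab N - {(True, i, j)}" using FLsub[OF ij'] sij by auto
    qed
    then show ?thesis unfolding m_def tij by simp
  qed
  have io: "rv.independent (m ` A) \<and> inj_on m A"
    by (rule indep_ordered[OF finA injrk tri])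
  have sub: "m ` A \<subseteq> rv.span (c' ` E')"
  proof
    fix x assume "x \<in> m ` A"
    then obtain i j where ij0: "(i,j) \<in> A" "x = m (i,j)" by auto
    have ij: "1 \<le> i" "i \<le> N" "1 \<le> j" "j \<le> N" using ij0 unfolding A_def by auto
    let ?S = "vid ` SP i j"
    have SQ: "?S \<subseteq> ?Q" using SP_sub[OF ij(2,4)] by auto
    have Sne: "?S \<noteq> {}" using ij unfolding SP_def by auto
    have "vid (Suc N, 1) \<in> ?Q" using N unfolding TermP_def by auto
    moreover have "vid (Suc N, 1) \<notin> ?S" unfolding SP_def by auto
    ultimately have SnQ: "?S \<noteq> ?Q" by blast
    have "mincut V' E' c' ?Q ?S = mincut ?V (emb ` Lab N) (cfun cl) ?Q ?S"
      using mim SQ Sne SnQ unfolding mimicking_def by blast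
    also have "\<dots> = x" using G_mincut[OF N ij cb] ij0 by (simp add: m_def)
    finally have "x = mincut V' E' c' ?Q ?S" by simp
    then show "x \<in> rv.span (c' ` E')"
      using mincut_in_span[OF net SQ QV] by simp
  qed
  have "card (m ` A) \<le> card (c' ` E')"
    using rv.independent_span_bound[OF _ _ sub] io finE by blast
  also have "\<dots> \<le> card E'" using finE by (rule card_image_le)
  finally have "card (m ` A) \<le> card E'" .
  moreover have "card (m ` A) = card A" using io card_image by blast
  moreover have "card A = N ^ 2" unfolding A_def by (simp add: power2_eq_square)
  ultimately show ?thesis by simp
qed

theorem theorem1p3:
  shows "\<exists>\<beta>::real. \<beta> > 0 \<and>
    (\<forall>k::nat. k > 5 \<longrightarrow>
      (\<exists>V E c Q. network V E c \<and> planar V E \<and> Q \<subseteq> V \<and> card Q = k \<and>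
         (\<forall>V' E' c'. mimicking V E c Q V' E' c' \<longrightarrow> real (card E') \<ge> \<beta> * real k ^ 2)))"
proof (rule exI[of _ "1/64::real"], intro conjI allI impI)
  show "(1/64::real) > 0" by simp
  fix k :: nat assume k: "k > 5"
  define N where "N = k div 4"
  define \<rho> where "\<rho> = k mod 4"
  have N1: "1 \<le> N" using k unfolding N_def by simp
  have kN: "k = 4 * N + \<rho>" unfolding N_def \<rho>_def by simp
  have k7: "k \<le> 8 * N" using kN N1 unfolding \<rho>_def by simp
  obtain cl where cl: "\<forall>l\<in>Lab N. wl N l < cl l \<and> cl l < wl N l + 1" "inj_on cl (Lab N)"
      "rv.independent (cl ` Lab N)"
    using exists_indep[OF finite_Lab zero_less_one, where lo="wl N"] by auto
  show "\<exists>V E c Q. network V E c \<and> planar V E \<and> Q \<subseteq> V \<and> card Q = k \<and>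
         (\<forall>V' E' c'. mimicking V E c Q V' E' c' \<longrightarrow> real (card E') \<ge> 1/64 * real k ^ 2)"
  proof (intro exI conjI allI impI)
    show "network (vid ` (GridP N \<union> TermP N \<rho>)) (emb ` Lab N) (cfun cl)"
      using cl(1) by (intro network_grid) auto
    show "planar (vid ` (GridP N \<union> TermP N \<rho>)) (emb ` Lab N)" by (rule planar_grid)
    show "vid ` TermP N \<rho> \<subseteq> vid ` (GridP N \<union> TermP N \<rho>)" by auto
    show "card (vid ` TermP N \<rho>) = k"
      using card_TermP[of N \<rho>] kN by (simp add: card_image inj_on_def)
    fix V' E' c'
    assume mim: "mimicking (vid ` (GridP N \<union> TermP N \<rho>)) (emb ` Lab N) (cfun cl) (vid ` TermP N \<rho>) V' E' c'"
    have "N ^ 2 \<le> card E'" using key_bound[OF N1 _ cl(2,3) mim] cl(1) by blast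
    then have h1: "real N ^ 2 \<le> real (card E')" by (metis of_nat_le_iff of_nat_power)
    have "real k \<le> 8 * real N" using k7 by linarith
    then have "real k ^ 2 \<le> (8 * real N) ^ 2" by (intro power_mono) auto
    then have h2: "real k ^ 2 \<le> 64 * real N ^ 2" by (simp add: power_mult_distrib)
    show "1/64 * real k ^ 2 \<le> real (card E')" using h1 h2 by linarith
  qed
qed


end
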